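(* Let $(M,\cdot,1)$ be a monoid, $\Sigma$ a finite alphabet, $\ell\in L$ and $(g,f)$ a factorization on $L$. Suppose the set $Q^{(g,f)}_\ell=\{S^{(g,f)}_\alpha(\ell)\mid\alpha\in\Sigma^*\}$ is finite (so that $N^{(g,f)}(\ell,1)$ is an $M$-DFA). Then for every $m\in M$ the $M$-DFA $N^{(g,f)}(\ell,m)$ satisfies: 1. it recognizes $m\cdot\ell$; 2. it is accessible; 3. each state $S^{(g,f)}_\alpha(\ell)\in Q^{(g,f)}_\ell$ is a recognizable $M$-language; 4. for each state $q=S^{(g,f)}_\alpha(\ell)$, the state language $\mathcal{N}_q$ of $N^{(g,f)}(\ell,m)$ equals $S^{(g,f)}_\alpha(\ell)$; 5. for all states $p,q$ of $N^{(g,f)}(\ell,m)$, $\mathcal{N}_p=\mathcal{N}_q$ implies $p=q$.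
   Context: $L$ is the set of all functions $\Sigma^*\to M$; $\varepsilon$ the empty word; $(m\cdot\ell)(\gamma)=m\cdot\ell(\gamma)$; $\Delta_\alpha(\ell)(\gamma)=\ell(\alpha\gamma)$. A factorization on $L$ is a pair of functions $g:L\to M$, $f:L\to L$ with $g(\ell)\cdot f(\ell)=\ell$ for all $\ell$. Define $S^{(g,f)}_\varepsilon=\mathrm{id}_L$, $S^{(g,f)}_{\alpha\sigma}=f\circ\Delta_\sigma\circ S^{(g,f)}_\alpha$ ($\sigma\in\Sigma$). An $M$-DFA is $(Q,\Sigma,u,i_u,\delta,w,\rho)$ with $Q$ finite nonempty, initial state $u$, initial value $i_u\in M$, $\delta:Q\times\Sigma\to Q$, $w:Q\times\Sigma\to M$, $\rho:Q\to M$; with $q\alpha$ the extended transition and $w^*(q,\varepsilon)=1$, $w^*(q,\alpha\sigma)=w^*(q,\alpha)\cdot w(q\alpha,\sigma)$, it recognizes $\alpha\mapsto i_u\cdot w^*(u,\alpha)\cdot\rho(u\alpha)$, and the language of state $q$ is $\alpha\mapsto w^*(q,\alpha)\cdot\rho(q\alpha)$. Recognizable means recognized by some $M$-DFA; accessible means every state is $u\alpha$ for some word $\alpha$. The automaton $N^{(g,f)}(\ell,m)$ has state set $Q^{(g,f)}_\ell$, initial state $S^{(g,f)}_\varepsilon(\ell)=\ell$, initial value $m$, transitions $\delta(S^{(g,f)}_\alpha(\ell),\sigma)=S^{(g,f)}_{\alpha\sigma}(\ell)$, monoid-transition values $w(S^{(g,f)}_\alpha(\ell),\sigma)=g(\Delta_\sigma(S^{(g,f)}_\alpha(\ell)))$,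 and final values $\rho(S^{(g,f)}_\alpha(\ell))=(S^{(g,f)}_\alpha(\ell))(\varepsilon)$. *)

theory Defs
  imports Main
begin

definition lscale :: "'m::monoid_mult \<Rightarrow> ('a list \<Rightarrow> 'm) \<Rightarrow> ('a list \<Rightarrow> 'm)" where
  "lscale m l = (\<lambda>\<gamma>. m * l \<gamma>)"

definition Delta :: "'a list \<Rightarrow> ('a list \<Rightarrow> 'm) \<Rightarrow> ('a list \<Rightarrow> 'm)" where
  "Delta \<alpha> l = (\<lambda>\<gamma>. l (\<alpha> @ \<gamma>))"

definition factorization ::
  "(('a list \<Rightarrow> 'm::monoid_mult) \<Rightarrow> 'm) \<Rightarrow> (('a list \<Rightarrow> 'm) \<Rightarrow> ('a list \<Rightarrow> 'm)) \<Rightarrow> bool" where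
  "factorization g f \<longleftrightarrow> (\<forall>l. lscale (g l) (f l) = l)"

definition S :: "(('a list \<Rightarrow> 'm) \<Rightarrow> ('a list \<Rightarrow> 'm)) \<Rightarrow> 'a list \<Rightarrow> ('a list \<Rightarrow> 'm) \<Rightarrow> ('a list \<Rightarrow> 'm)" where
  "S f \<alpha> = foldl (\<lambda>h \<sigma>. f \<circ> Delta [\<sigma>] \<circ> h) id \<alpha>"

definition Qset :: "(('a list \<Rightarrow> 'm) \<Rightarrow> ('a list \<Rightarrow> 'm)) \<Rightarrow> ('a list \<Rightarrow> 'm) \<Rightarrow> ('a list \<Rightarrow> 'm) set" where
  "Qset f l = {S f \<alpha> l | \<alpha>. True}"

record ('q, 'a, 'm) mdfa =
  states :: "'q set"
  init :: 'q
  ival :: 'm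
  trans :: "'q \<Rightarrow> 'a \<Rightarrow> 'q"
  wt :: "'q \<Rightarrow> 'a \<Rightarrow> 'm"
  fin :: "'q \<Rightarrow> 'm"

definition is_mdfa :: "('q, 'a, 'm) mdfa \<Rightarrow> bool" where
  "is_mdfa A \<longleftrightarrow> finite (states A) \<and> states A \<noteq> {} \<and> init A \<in> states A
     \<and> (\<forall>q\<in>states A. \<forall>\<sigma>. trans A q \<sigma> \<in> states A)"

definition ext :: "('q, 'a, 'm) mdfa \<Rightarrow> 'q \<Rightarrow> 'a list \<Rightarrow> 'q" where
  "ext A q \<alpha> = foldl (trans A) q \<alpha>"

fun wstar_rev :: "('q, 'a, 'm::monoid_mult) mdfa \<Rightarrow> 'q \<Rightarrow> 'a list \<Rightarrow> 'm" where
  "wstar_rev A q [] = 1"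
| "wstar_rev A q (\<sigma> # r) = wstar_rev A q r * wt A (ext A q (rev r)) \<sigma>"

definition wstar :: "('q, 'a, 'm::monoid_mult) mdfa \<Rightarrow> 'q \<Rightarrow> 'a list \<Rightarrow> 'm" where
  "wstar A q \<alpha> = wstar_rev A q (rev \<alpha>)"

definition mdfa_lang :: "('q, 'a, 'm::monoid_mult) mdfa \<Rightarrow> 'a list \<Rightarrow> 'm" where
  "mdfa_lang A = (\<lambda>\<alpha>. ival A * wstar A (init A) \<alpha> * fin A (ext A (init A) \<alpha>))"

definition state_lang :: "('q, 'a, 'm::monoid_mult) mdfa \<Rightarrow> 'q \<Rightarrow> 'a list \<Rightarrow> 'm" where
  "state_lang A q = (\<lambda>\<alpha>. wstar A q \<alpha> * fin A (ext A q \<alpha>))"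

definition accessible :: "('q, 'a, 'm) mdfa \<Rightarrow> bool" where
  "accessible A \<longleftrightarrow> (\<forall>q\<in>states A. \<exists>\<alpha>. q = ext A (init A) \<alpha>)"

text \<open>Recognizable: recognized by some M-DFA; states encoded as natural numbers
  (any finite state set can be so encoded).\<close>
definition recognizable :: "('a list \<Rightarrow> 'm::monoid_mult) \<Rightarrow> bool" where
  "recognizable l \<longleftrightarrow> (\<exists>A :: (nat, 'a, 'm) mdfa. is_mdfa A \<and> mdfa_lang A = l)"

definition Naut :: "(('a list \<Rightarrow> 'm::monoid_mult) \<Rightarrow> 'm) \<Rightarrow> (('a list \<Rightarrow> 'm) \<Rightarrow> ('a list \<Rightarrow> 'm))
    \<Rightarrow> ('a list \<Rightarrow> 'm) \<Rightarrow> 'm \<Rightarrow> ('a list \<Rightarrow> 'm, 'a, 'm) mdfa" where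
  "Naut g f l m = \<lparr> states = Qset f l, init = S f [] l, ival = m,
      trans = (\<lambda>q \<sigma>. f (Delta [\<sigma>] q)),
      wt = (\<lambda>q \<sigma>. g (Delta [\<sigma>] q)),
      fin = (\<lambda>q. q []) \<rparr>"

end

theory Submission
  imports Defs
begin

lemma S_snoc: "S f (\<alpha> @ [\<sigma>]) q = f (Delta [\<sigma>] (S f \<alpha> q))"
  by (simp add: S_def)

lemma S_nil: "S f [] q = q" by (simp add: S_def)

lemma S_append: "S f (\<alpha> @ \<beta>) q = S f \<beta> (S f \<alpha> q)"
  proof (induction \<beta> rule: rev_induct)
  case Nil then show ?case by (simp add: S_nil)
next
  case (snoc x xs)
  have "S f (\<alpha> @ xs @ [x]) q = f (Delta [x] (S f (\<alpha> @ xs) q))"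
    using S_snoc[of f "\<alpha> @ xs"] by simp
  then show ?case using snoc by (simp add: S_snoc)
qed

lemma ext_snoc: "ext A q (\<alpha> @ [\<sigma>]) = trans A (ext A q \<alpha>) \<sigma>"
  by (simp add: ext_def)

lemma wstar_snoc: "wstar A q (\<alpha> @ [\<sigma>]) = wstar A q \<alpha> * wt A (ext A q \<alpha>) \<sigma>"
  by (simp add: wstar_def)

lemma wstar_nil: "wstar A q [] = 1" by (simp add: wstar_def)

lemma ext_N: "ext (Naut g f l m) q \<alpha> = S f \<alpha> q"
  by (induction \<alpha> rule: rev_induct)
     (simp_all add: ext_snoc S_snoc, simp_all add: ext_def S_def Naut_def)

lemma wstar_N:
  assumes "factorization g f"
  shows "wstar (Naut g f l m) q \<gamma> * S f \<gamma> q \<delta> = q (\<gamma> @ \<delta>)"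
proof (induction \<gamma> arbitrary: \<delta> rule: rev_induct)
  case Nil
  then show ?case by (simp add: wstar_nil S_nil)
next
  case (snoc \<sigma> \<gamma>)
  let ?p = "S f \<gamma> q"
  have fac: "g x * f x y = x y" for x y
    using assms unfolding factorization_def lscale_def by metis
  have "wstar (Naut g f l m) q (\<gamma> @ [\<sigma>]) * S f (\<gamma> @ [\<sigma>]) q \<delta>
      = wstar (Naut g f l m) q \<gamma> * (g (Delta [\<sigma>] ?p) * f (Delta [\<sigma>] ?p) \<delta>)"
    by (simp add: wstar_snoc S_snoc ext_N mult.assoc) (simp add: Naut_def)
  also have "\<dots> = wstar (Naut g f l m) q \<gamma> * ?p (\<sigma> # \<delta>)"
    by (simp add: fac Delta_def)
  also have "\<dots> = q (\<gamma> @ [\<sigma>] @ \<delta>)" using snoc by simp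
  finally show ?case by simp
qed

lemma N_simps:
  "states (Naut g f l m) = Qset f l" "init (Naut g f l m) = l" "ival (Naut g f l m) = m"
  "trans (Naut g f l m) q \<sigma> = f (Delta [\<sigma>] q)"
  "wt (Naut g f l m) q \<sigma> = g (Delta [\<sigma>] q)"
  "fin (Naut g f l m) q = q []"
  by (simp_all add: Naut_def S_nil)

lemma state_lang_N:
  assumes "factorization g f"
  shows "state_lang (Naut g f l m) q = q"
proof
  fix \<gamma>
  have "state_lang (Naut g f l m) q \<gamma> = wstar (Naut g f l m) q \<gamma> * S f \<gamma> q []"
    unfolding state_lang_def by (simp only: ext_N N_simps)
  also have "\<dots> = q \<gamma>" using wstar_N[OF assms, of l m q \<gamma> "[]"] by simp
  finally show "state_lang (Naut g f l m) q \<gamma> = q \<gamma>" .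
qed

lemma Qset_mem: "S f \<alpha> l \<in> Qset f l" unfolding Qset_def by blast

lemma is_mdfa_N:
  assumes "finite (Qset f l)"
  shows "is_mdfa (Naut g f l m)"
  unfolding is_mdfa_def N_simps
proof (intro conjI ballI allI)
  show "finite (Qset f l)" by fact
  have "l \<in> Qset f l" using Qset_mem[of f "[]" l] by (simp only: S_nil)
  then show "Qset f l \<noteq> {}" "l \<in> Qset f l" by blast+
  fix q \<sigma> assume "q \<in> Qset f l"
  then obtain \<alpha> where "q = S f \<alpha> l" unfolding Qset_def by blast
  then show "f (Delta [\<sigma>] q) \<in> Qset f l" using Qset_mem[of f "\<alpha> @ [\<sigma>]" l]
    by (simp only: S_snoc)
qed

definition mapA :: "('q \<Rightarrow> nat) \<Rightarrow> ('q, 'a, 'm) mdfa \<Rightarrow> (nat, 'a, 'm) mdfa" where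
  "mapA h A = \<lparr> states = h ` states A, init = h (init A), ival = ival A,
     trans = (\<lambda>n \<sigma>. h (trans A (inv_into (states A) h n) \<sigma>)),
     wt = (\<lambda>n \<sigma>. wt A (inv_into (states A) h n) \<sigma>),
     fin = (\<lambda>n. fin A (inv_into (states A) h n)) \<rparr>"

lemma mapA_simps:
  "states (mapA h A) = h ` states A" "init (mapA h A) = h (init A)" "ival (mapA h A) = ival A"
  "trans (mapA h A) n \<sigma> = h (trans A (inv_into (states A) h n) \<sigma>)"
  "wt (mapA h A) n \<sigma> = wt A (inv_into (states A) h n) \<sigma>"
  "fin (mapA h A) n = fin A (inv_into (states A) h n)"
  by (simp_all add: mapA_def)

lemma mapA_ext:
  assumes "is_mdfa A" "inj_on h (states A)"
  shows "ext (mapA h A) (h (init A)) \<alpha> = h (ext A (init A) \<alpha>) \<and> ext A (init A) \<alpha> \<in> states A"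
proof (induction \<alpha> rule: rev_induct)
  case Nil
  then show ?case using assms by (simp add: ext_def is_mdfa_def)
next
  case (snoc x xs)
  let ?q = "ext A (init A) xs"
  have q: "?q \<in> states A" using snoc by blast
  have inv: "inv_into (states A) h (h ?q) = ?q" using inv_into_f_f[OF assms(2) q] .
  have "ext (mapA h A) (h (init A)) (xs @ [x]) = trans (mapA h A) (h ?q) x"
    using snoc by (simp only: ext_snoc)
  also have "\<dots> = h (trans A ?q x)" by (simp only: mapA_simps inv)
  finally show ?case using q assms(1) unfolding is_mdfa_def by (simp add: ext_snoc)
qed

lemma mapA_wstar:
  assumes "is_mdfa A" "inj_on h (states A)"
  shows "wstar (mapA h A) (h (init A)) \<alpha> = wstar A (init A) \<alpha>"
proof (induction \<alpha> rule: rev_induct)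
  case Nil
  then show ?case by (simp add: wstar_nil)
next
  case (snoc x xs)
  let ?q = "ext A (init A) xs"
  have q: "?q \<in> states A" and e: "ext (mapA h A) (h (init A)) xs = h ?q"
    using mapA_ext[OF assms, of xs] by blast+
  have inv: "inv_into (states A) h (h ?q) = ?q" using inv_into_f_f[OF assms(2) q] .
  show ?case by (simp only: wstar_snoc snoc e mapA_simps inv)
qed

lemma mapA_lang:
  assumes "is_mdfa A" "inj_on h (states A)"
  shows "is_mdfa (mapA h A) \<and> mdfa_lang (mapA h A) = mdfa_lang A"
proof
  show "is_mdfa (mapA h A)"
    unfolding is_mdfa_def mapA_simps
  proof (intro conjI ballI allI)
    show "finite (h ` states A)" using assms(1) by (simp add: is_mdfa_def)
    show "h ` states A \<noteq> {}" using assms(1) by (simp add: is_mdfa_def)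
    show "h (init A) \<in> h ` states A" using assms(1) by (simp add: is_mdfa_def)
    fix n \<sigma> assume "n \<in> h ` states A"
    then have "inv_into (states A) h n \<in> states A" by (rule inv_into_into)
    then show "h (trans A (inv_into (states A) h n) \<sigma>) \<in> h ` states A"
      using assms(1) by (simp add: is_mdfa_def)
  qed
  show "mdfa_lang (mapA h A) = mdfa_lang A"
  proof
    fix \<alpha>
    let ?q = "ext A (init A) \<alpha>"
    have q: "?q \<in> states A" and e: "ext (mapA h A) (h (init A)) \<alpha> = h ?q"
      using mapA_ext[OF assms, of \<alpha>] by blast+
    have inv: "inv_into (states A) h (h ?q) = ?q" using inv_into_f_f[OF assms(2) q] .
    show "mdfa_lang (mapA h A) \<alpha> = mdfa_lang A \<alpha>"
      unfolding mdfa_lang_def by (simp only: mapA_simps e inv mapA_wstar[OF assms])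
  qed
qed

lemma recog:
  assumes "is_mdfa (A :: ('q, 'a, 'm::monoid_mult) mdfa)"
  shows "recognizable (mdfa_lang A)"
proof -
  have "finite (states A)" using assms by (simp add: is_mdfa_def)
  then obtain h :: "'q \<Rightarrow> nat" where "inj_on h (states A)"
    using finite_imp_inj_to_nat_seg by blast
  then show ?thesis using mapA_lang[OF assms] unfolding recognizable_def by blast
qed

lemma mdfa_lang_N:
  assumes "factorization g f"
  shows "mdfa_lang (Naut g f l m) = lscale m l"
proof
  fix \<alpha>
  have "mdfa_lang (Naut g f l m) \<alpha> = m * (wstar (Naut g f l m) l \<alpha> * S f \<alpha> l [])"
    unfolding mdfa_lang_def by (simp only: ext_N N_simps mult.assoc)
  also have "\<dots> = m * l \<alpha>" using wstar_N[OF assms, of l m l \<alpha> "[]"] by simp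
  finally show "mdfa_lang (Naut g f l m) \<alpha> = lscale m l \<alpha>" by (simp add: lscale_def)
qed

theorem mainTheorem10:
  fixes g :: "('a::finite list \<Rightarrow> 'm::monoid_mult) \<Rightarrow> 'm"
    and f :: "('a list \<Rightarrow> 'm) \<Rightarrow> ('a list \<Rightarrow> 'm)"
    and l :: "'a list \<Rightarrow> 'm"
  assumes "factorization g f"
    and "finite (Qset f l)"
  shows "\<forall>m. is_mdfa (Naut g f l m)
    \<and> mdfa_lang (Naut g f l m) = lscale m l
    \<and> accessible (Naut g f l m)
    \<and> (\<forall>\<alpha>. recognizable (S f \<alpha> l))
    \<and> (\<forall>\<alpha>. state_lang (Naut g f l m) (S f \<alpha> l) = S f \<alpha> l)
    \<and> (\<forall>p\<in>states (Naut g f l m). \<forall>q\<in>states (Naut g f l m).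
          state_lang (Naut g f l m) p = state_lang (Naut g f l m) q \<longrightarrow> p = q)"
proof (intro allI conjI)
  fix m
  show "is_mdfa (Naut g f l m)" using is_mdfa_N[OF assms(2)] .
  show "mdfa_lang (Naut g f l m) = lscale m l" using mdfa_lang_N[OF assms(1)] .
  show "accessible (Naut g f l m)"
    unfolding accessible_def N_simps
  proof
    fix q assume "q \<in> Qset f l"
    then obtain \<alpha> where "q = S f \<alpha> l" unfolding Qset_def by blast
    then show "\<exists>\<alpha>. q = ext (Naut g f l m) l \<alpha>" by (simp only: ext_N) blast
  qed
  fix \<alpha>
  show "state_lang (Naut g f l m) (S f \<alpha> l) = S f \<alpha> l"
    using state_lang_N[OF assms(1)] by blast
  show "\<forall>p\<in>states (Naut g f l m). \<forall>q\<in>states (Naut g f l m).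
          state_lang (Naut g f l m) p = state_lang (Naut g f l m) q \<longrightarrow> p = q"
    by (simp only: state_lang_N[OF assms(1)]) blast
  have sub: "Qset f (S f \<alpha> l) \<subseteq> Qset f l"
  proof
    fix q assume "q \<in> Qset f (S f \<alpha> l)"
    then obtain \<beta> where "q = S f \<beta> (S f \<alpha> l)" unfolding Qset_def by blast
    then show "q \<in> Qset f l" using Qset_mem[of f "\<alpha> @ \<beta>" l] by (simp only: S_append)
  qed
  have fin: "finite (Qset f (S f \<alpha> l))" using finite_subset[OF sub assms(2)] .
  have "mdfa_lang (Naut g f (S f \<alpha> l) 1) = S f \<alpha> l"
    using mdfa_lang_N[OF assms(1), of "S f \<alpha> l" 1] by (simp add: lscale_def)
  then show "recognizable (S f \<alpha> l)"
    using recog[OF is_mdfa_N[OF fin, of g 1]] by simp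
qed

end
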